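(* Let $S\in\mathbb{R}^{n\times n}$, $n=2m$, be nonsingular and skew-symmetric with eigenvalues $\pm\mathrm{i}\sigma_j$, where $\sigma_1=\cdots=\sigma_r>\sigma_{r+1}\ge\cdots\ge\sigma_m>0$ for some $1\le r<m$, and let $u_j,v_j$ be as follows: $\{u_1,\ldots,u_m,v_1,\ldots,v_m\}$ is an orthonormal basis of $\mathbb{R}^n$ with $Sv_j=\sigma_ju_j$, $Su_j=-\sigma_jv_j$. Let $q_0=2\sum_{i=1}^m(\alpha_{i,1}u_i-\alpha_{i,2}v_i)$ be a real unit vector with $\sum_{i=1}^r(\alpha_{i,1}^2+\alpha_{i,2}^2)>0$, and let $q_{2k+1}=Sq_{2k}/\|Sq_{2k}\|$, $q_{2k+2}=-Sq_{2k+1}/\|Sq_{2k+1}\|$. Let $x_e$ and $x_o$ be the unit vectors obtained by normalizing $\sum_{i=1}^r(\alpha_{i,1}u_i-\alpha_{i,2}v_i)$ and $\sum_{i=1}^r(-\alpha_{i,1}v_i-\alpha_{i,2}u_i)$, respectively. Then $q_{2k}\to x_e$ and $q_{2k-1}\to x_o$ as $k\to\infty$; $x_o\perp x_e$; $Sx_o=-\sigma_1x_e$ and $Sx_e=\sigma_1x_o$, so $\frac{\sqrt2}{2}(x_o\pm\mathrm{i}x_e)$ are unit eigenvectors of $S$ for $\pm\mathrm{i}\sigma_1$. Moreover, $|\tan\angle(q_{2k},x_e)|\le(\sigma_{r+1}/\sigma_1)^{2k}|\tan\angle(q_0,x_e)|$ and $|\tan\angle(q_{2k-1},x_o)|\le(\sigma_{r+1}/\sigma_1)^{2(k-1)}|\tan\angle(Sq_0,x_o)|$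 for all $k\ge1$.
   Context: $\|\cdot\|$ is the Euclidean norm; $\angle(x,y)$ is the acute angle between real vectors $x,y$, with $\cos\angle(x,y)=|x^Ty|/(\|x\|\|y\|)$. *)

theory Defs
  imports "HOL-Analysis.Analysis"
begin

definition acute_angle :: "'a::real_inner \<Rightarrow> 'a \<Rightarrow> real" where
  "acute_angle x y = arccos (\<bar>x \<bullet> y\<bar> / (norm x * norm y))"

definition cmat :: "real^'n^'m \<Rightarrow> complex^'n^'m" where
  "cmat A = (\<chi> i j. complex_of_real (A $ i $ j))"

definition cvec :: "real^'n \<Rightarrow> real^'n \<Rightarrow> complex^'n" where
  "cvec x y = (\<chi> j. Complex (x $ j) (y $ j))"

end

theory Submission
  imports Defs
begin


lemma ang_scale:
  fixes x y :: "'a::real_inner"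
  assumes "c > 0" shows "acute_angle (c *\<^sub>R x) y = acute_angle x y"
proof (cases "x = 0 \<or> y = 0")
  case True then show ?thesis by (auto simp: acute_angle_def)
next
  case False
  then show ?thesis using assms by (simp add: acute_angle_def abs_mult)
qed

lemma ang_main:
  fixes A R :: "'a::real_inner"
  assumes A: "norm A = 1" and orth: "A \<bullet> R = 0" and t: "t > 0"
  shows "tan (acute_angle (t *\<^sub>R A + R) A) = norm R / t"
    and "norm ((1 / norm (t *\<^sub>R A + R)) *\<^sub>R (t *\<^sub>R A + R) - A) \<le> 2 * norm R / t"
    and "norm (t *\<^sub>R A + R) \<ge> t"
proof -
  define x where "x = t *\<^sub>R A + R"
  have AA: "A \<bullet> A = 1" using A by (metis norm_eq_sqrt_inner power2_norm_eq_inner power_one real_sqrt_eq_1_iff)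
  have xA: "x \<bullet> A = t" using AA orth by (simp add: x_def inner_add_left inner_commute[of R A])
  have nx2: "(norm x)\<^sup>2 = t\<^sup>2 + (norm R)\<^sup>2"
  proof -
    have "(t *\<^sub>R A) \<bullet> R = 0" using orth by simp
    then have "(norm x)\<^sup>2 = (norm (t *\<^sub>R A))\<^sup>2 + (norm R)\<^sup>2"
      unfolding x_def using norm_add_Pythagorean[of "t *\<^sub>R A" R] by (simp add: orthogonal_def)
    then show ?thesis using A by (simp add: power_mult_distrib)
  qed
  have nxt: "norm x \<ge> t"
  proof -
    have "t\<^sup>2 \<le> (norm x)\<^sup>2" using nx2 by simp
    then show ?thesis using power2_le_imp_le[of t "norm x"] by simp
  qed
  then show "norm (t *\<^sub>R A + R) \<ge> t" by (simp add: x_def)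
  have nxp: "norm x > 0" using nxt t by linarith
  define c where "c = t / norm x"
  have c01: "0 < c" "c \<le> 1" using nxt nxp t by (auto simp: c_def)
  have ang: "acute_angle x A = arccos c" using xA A t by (simp add: acute_angle_def c_def)
  have "1 - c\<^sup>2 = ((norm R) / norm x)\<^sup>2"
  proof -
    have "1 - c\<^sup>2 = ((norm x)\<^sup>2 - t\<^sup>2) / (norm x)\<^sup>2"
      using nxp by (simp add: c_def power_divide diff_divide_distrib)
    also have "\<dots> = (norm R)\<^sup>2 / (norm x)\<^sup>2" using nx2 by simp
    finally show ?thesis by (simp add: power_divide)
  qed
  then have s: "sqrt (1 - c\<^sup>2) = norm R / norm x" using nxp by simp
  have "tan (acute_angle x A) = sqrt (1 - c\<^sup>2) / c"
    using c01 by (simp add: ang tan_def sin_arccos_abs)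
  also have "\<dots> = norm R / t" unfolding s using nxp t by (simp add: c_def field_simps)
  finally show "tan (acute_angle (t *\<^sub>R A + R) A) = norm R / t" by (simp add: x_def)
  have "(1 / norm x) *\<^sub>R x - A = (c - 1) *\<^sub>R A + (1 / norm x) *\<^sub>R R"
    using nxp by (simp add: x_def c_def algebra_simps)
  moreover have "norm ((c - 1) *\<^sub>R A + (1 / norm x) *\<^sub>R R) \<le> norm ((c - 1) *\<^sub>R A) + norm ((1 / norm x) *\<^sub>R R)"
    by (rule norm_triangle_ineq)
  ultimately have "norm ((1 / norm x) *\<^sub>R x - A) \<le> \<bar>c - 1\<bar> * norm A + norm R / norm x"
    using nxp by simp
  also have "\<dots> = (1 - c) + norm R / norm x" using c01 A by simp
  also have "1 - c = (norm x - t) / norm x" using nxp by (simp add: c_def field_simps)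
  also have "norm x - t \<le> norm R"
    using norm_triangle_ineq[of "t *\<^sub>R A" R] A t by (simp add: x_def)
  then have "(norm x - t) / norm x \<le> norm R / norm x" using nxp by (simp add: divide_right_mono)
  then have "(norm x - t) / norm x + norm R / norm x \<le> 2 * (norm R / norm x)" by simp
  also have "norm R / norm x \<le> norm R / t" using nxt t by (simp add: frac_le)
  finally show "norm ((1 / norm (t *\<^sub>R A + R)) *\<^sub>R (t *\<^sub>R A + R) - A) \<le> 2 * norm R / t"
    by (simp add: x_def)
qed



lemma cmat_cvec: "cmat S *v cvec x y = cvec (S *v x) (S *v y)"
  by (simp add: vec_eq_iff cmat_def cvec_def matrix_vector_mult_def complex_eq_iff Re_sum Im_sum)

lemma cmat_scaleR: "cmat S *v (c *\<^sub>R z) = c *\<^sub>R (cmat S *v z)"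
  by (simp add: vec_eq_iff matrix_vector_mult_def scaleR_sum_right)

lemma neg_mv: "(S::real^'n^'n) *v (- x) = - (S *v x)"
  using matrix_vector_mult_scaleR[of S "-1" x] by simp

lemma eig_pm:
  fixes S :: "real^'n^'n"
  assumes o: "S *v xo = - (s *\<^sub>R xe)" and e: "S *v xe = s *\<^sub>R xo"
  shows "cmat S *v ((sqrt 2 / 2) *\<^sub>R cvec xo xe) = (\<i> * complex_of_real s) *s ((sqrt 2 / 2) *\<^sub>R cvec xo xe)"
    and "cmat S *v ((sqrt 2 / 2) *\<^sub>R cvec xo (- xe)) = (- \<i> * complex_of_real s) *s ((sqrt 2 / 2) *\<^sub>R cvec xo (- xe))"
proof -
  have a: "cmat S *v ((sqrt 2 / 2) *\<^sub>R cvec xo xe) = (sqrt 2 / 2) *\<^sub>R cvec (- (s *\<^sub>R xe)) (s *\<^sub>R xo)"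
    by (simp only: cmat_scaleR cmat_cvec o e)
  then show "cmat S *v ((sqrt 2 / 2) *\<^sub>R cvec xo xe) = (\<i> * complex_of_real s) *s ((sqrt 2 / 2) *\<^sub>R cvec xo xe)"
    by (simp add: vec_eq_iff cvec_def complex_eq_iff)
  have b: "cmat S *v ((sqrt 2 / 2) *\<^sub>R cvec xo (- xe)) = (sqrt 2 / 2) *\<^sub>R cvec (- (s *\<^sub>R xe)) (- (s *\<^sub>R xo))"
    by (simp only: cmat_scaleR cmat_cvec o e neg_mv)
  then show "cmat S *v ((sqrt 2 / 2) *\<^sub>R cvec xo (- xe)) = (- \<i> * complex_of_real s) *s ((sqrt 2 / 2) *\<^sub>R cvec xo (- xe))"
    by (simp add: vec_eq_iff cvec_def complex_eq_iff)
qed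

lemma norm_cvec: "norm (cvec x y) = sqrt ((norm x)\<^sup>2 + (norm y)\<^sup>2)"
proof -
  have i: "cvec x y \<bullet> cvec x y = x \<bullet> x + y \<bullet> y"
    by (simp add: inner_vec_def cvec_def inner_complex_def sum.distrib)
  show ?thesis unfolding norm_eq_sqrt_inner[of "cvec x y"] i power2_norm_eq_inner ..
qed

lemma norm_eig:
  fixes x y :: "real^'n"
  assumes "norm x = 1" "norm y = 1"
  shows "norm ((sqrt 2 / 2) *\<^sub>R cvec x y) = 1"
  using assms by (simp add: norm_cvec)



locale setting =
  fixes S :: "real^'n^'n" and m r :: nat
    and \<sigma> :: "nat \<Rightarrow> real" and u v :: "nat \<Rightarrow> real^'n"
  assumes r: "1 \<le> r" "r < m"
    and sig_top: "\<And>j. 1 \<le> j \<Longrightarrow> j \<le> r \<Longrightarrow> \<sigma> j = \<sigma> 1"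
    and sig_gap: "\<sigma> 1 > \<sigma> (r + 1)"
    and sig_mono: "\<And>j. r + 1 \<le> j \<Longrightarrow> j < m \<Longrightarrow> \<sigma> j \<ge> \<sigma> (j + 1)"
    and sig_pos: "\<sigma> m > 0"
    and uu: "\<And>i j. i \<in> {1..m} \<Longrightarrow> j \<in> {1..m} \<Longrightarrow> u i \<bullet> u j = (if i = j then 1 else 0)"
    and vv: "\<And>i j. i \<in> {1..m} \<Longrightarrow> j \<in> {1..m} \<Longrightarrow> v i \<bullet> v j = (if i = j then 1 else 0)"
    and uv: "\<And>i j. i \<in> {1..m} \<Longrightarrow> j \<in> {1..m} \<Longrightarrow> u i \<bullet> v j = 0"
    and Sv: "\<And>j. j \<in> {1..m} \<Longrightarrow> S *v v j = \<sigma> j *\<^sub>R u j"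
    and Su: "\<And>j. j \<in> {1..m} \<Longrightarrow> S *v u j = - (\<sigma> j *\<^sub>R v j)"
begin

definition G :: "(nat \<Rightarrow> real) \<Rightarrow> (nat \<Rightarrow> real) \<Rightarrow> real^'n" where
  "G a b = (\<Sum>i=1..m. a i *\<^sub>R u i + b i *\<^sub>R v i)"

lemma vu: "i \<in> {1..m} \<Longrightarrow> j \<in> {1..m} \<Longrightarrow> v i \<bullet> u j = 0"
  using uv by (simp add: inner_commute)

lemma G_inner: "G a b \<bullet> G c d = (\<Sum>i=1..m. a i * c i + b i * d i)"
proof -
  have "G a b \<bullet> G c d = (\<Sum>i\<in>{1..m}. \<Sum>j\<in>{1..m}. (a i *\<^sub>R u i + b i *\<^sub>R v i) \<bullet> (c j *\<^sub>R u j + d j *\<^sub>R v j))"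
    by (simp add: G_def inner_sum_left inner_sum_right) (rule sum.swap)
  also have "\<dots> = (\<Sum>i\<in>{1..m}. \<Sum>j\<in>{1..m}. if i = j then a i * c i + b i * d i else 0)"
    by (intro sum.cong refl) (simp add: inner_add_left inner_add_right uu vv uv vu)
  also have "\<dots> = (\<Sum>i=1..m. a i * c i + b i * d i)" by simp
  finally show ?thesis .
qed

lemma G_norm2: "(norm (G a b))\<^sup>2 = (\<Sum>i=1..m. (a i)\<^sup>2 + (b i)\<^sup>2)"
  unfolding power2_norm_eq_inner G_inner by (simp add: power2_eq_square)

lemma G_cong: "(\<And>i. i \<in> {1..m} \<Longrightarrow> a i = a' i) \<Longrightarrow> (\<And>i. i \<in> {1..m} \<Longrightarrow> b i = b' i) \<Longrightarrow> G a b = G a' b'"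
  unfolding G_def by (intro sum.cong) auto

lemma G_scale: "G (\<lambda>i. c * a i) (\<lambda>i. c * b i) = c *\<^sub>R G a b"
  unfolding G_def by (simp add: scaleR_sum_right scaleR_add_right)

lemma G_add: "G (\<lambda>i. a i + a' i) (\<lambda>i. b i + b' i) = G a b + G a' b'"
  unfolding G_def by (simp add: sum.distrib scaleR_add_left algebra_simps)

lemma SG: "S *v G a b = G (\<lambda>i. \<sigma> i * b i) (\<lambda>i. - (\<sigma> i * a i))"
proof -
  have "S *v G a b = (\<Sum>i=1..m. S *v (a i *\<^sub>R u i + b i *\<^sub>R v i))"
    unfolding G_def by (simp add: linear_sum[OF matrix_vector_mul_linear] o_def)
  also have "\<dots> = G (\<lambda>i. \<sigma> i * b i) (\<lambda>i. - (\<sigma> i * a i))"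
    unfolding G_def by (intro sum.cong refl) (simp add: matrix_vector_right_distrib matrix_vector_mult_scaleR Su Sv mult.commute)
  finally show ?thesis .
qed

lemma sumT: "(\<Sum>i=1..m. if i \<le> r then f i else 0) = (\<Sum>i=1..r. (f i :: 'b::comm_monoid_add))"
proof -
  have "{1..m} \<inter> {i. i \<le> r} = {1..r}" using r by auto
  then show ?thesis using sum.inter_restrict[of "{1..m}" f "{i. i \<le> r}"] by simp
qed

lemma sig_le: "r + 1 \<le> j \<Longrightarrow> j \<le> m \<Longrightarrow> \<sigma> j \<le> \<sigma> (r + 1)"
proof (induction j rule: dec_induct)
  case base then show ?case by simp
next
  case (step n) then show ?case using sig_mono[of n] by simp
qed

lemma sig_ge: "j \<le> m \<Longrightarrow> r + 1 \<le> j \<Longrightarrow> \<sigma> j \<ge> \<sigma> m"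
proof (induction j rule: inc_induct)
  case base then show ?case by simp
next
  case (step n) then show ?case using sig_mono[of n] by simp
qed

lemma sig_pos_all: "i \<in> {1..m} \<Longrightarrow> \<sigma> i > 0"
proof -
  assume i: "i \<in> {1..m}"
  have s1: "\<sigma> 1 > 0" using sig_gap sig_ge[of "r+1"] sig_pos r by simp
  show ?thesis
  proof (cases "i \<le> r")
    case True then show ?thesis using sig_top[of i] i s1 by simp
  next
    case False then show ?thesis using sig_ge[of i] i sig_pos by simp
  qed
qed

end

locale setting2 = setting +
  fixes \<alpha>1 \<alpha>2 :: "nat \<Rightarrow> real"
  assumes alpha_pos: "(\<Sum>i=1..r. (\<alpha>1 i)\<^sup>2 + (\<alpha>2 i)\<^sup>2) > 0"
begin

definition T :: "(nat \<Rightarrow> real) \<Rightarrow> nat \<Rightarrow> real" where "T f = (\<lambda>i. if i \<le> r then f i else 0)"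
definition BB :: "(nat \<Rightarrow> real) \<Rightarrow> nat \<Rightarrow> real" where "BB f = (\<lambda>i. if i \<le> r then 0 else f i)"

definition "Bv = G (T \<alpha>1) (T (\<lambda>i. - \<alpha>2 i))"
definition "Cv = G (T (\<lambda>i. - \<alpha>2 i)) (T (\<lambda>i. - \<alpha>1 i))"
definition "nb = norm Bv"
definition "xe = (1 / nb) *\<^sub>R Bv"
definition "xo = (1 / nb) *\<^sub>R Cv"

definition "Ev k = G (\<lambda>i. \<sigma> i ^ (2*k) * \<alpha>1 i) (\<lambda>i. - (\<sigma> i ^ (2*k) * \<alpha>2 i))"
definition "Od k = G (\<lambda>i. - (\<sigma> i ^ (2*k+1) * \<alpha>2 i)) (\<lambda>i. - (\<sigma> i ^ (2*k+1) * \<alpha>1 i))"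
definition "RE k = G (BB (\<lambda>i. \<sigma> i ^ (2*k) * \<alpha>1 i)) (BB (\<lambda>i. - (\<sigma> i ^ (2*k) * \<alpha>2 i)))"
definition "RO k = G (BB (\<lambda>i. - (\<sigma> i ^ (2*k+1) * \<alpha>2 i))) (BB (\<lambda>i. - (\<sigma> i ^ (2*k+1) * \<alpha>1 i)))"

lemma Bv_sum: "Bv = (\<Sum>i=1..r. \<alpha>1 i *\<^sub>R u i - \<alpha>2 i *\<^sub>R v i)"
proof -
  have "Bv = (\<Sum>i=1..m. if i \<le> r then \<alpha>1 i *\<^sub>R u i - \<alpha>2 i *\<^sub>R v i else 0)"
    unfolding Bv_def G_def T_def by (intro sum.cong refl) auto
  then show ?thesis by (simp only: sumT)
qed

lemma Cv_sum: "Cv = (\<Sum>i=1..r. - (\<alpha>1 i *\<^sub>R v i) - \<alpha>2 i *\<^sub>R u i)"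
proof -
  have "Cv = (\<Sum>i=1..m. if i \<le> r then - (\<alpha>1 i *\<^sub>R v i) - \<alpha>2 i *\<^sub>R u i else 0)"
    unfolding Cv_def G_def T_def by (intro sum.cong refl) auto
  then show ?thesis by (simp only: sumT)
qed

lemma nb2: "nb\<^sup>2 = (\<Sum>i=1..r. (\<alpha>1 i)\<^sup>2 + (\<alpha>2 i)\<^sup>2)"
proof -
  have "nb\<^sup>2 = (\<Sum>i=1..m. if i \<le> r then (\<alpha>1 i)\<^sup>2 + (\<alpha>2 i)\<^sup>2 else 0)"
    unfolding nb_def Bv_def G_norm2 T_def by (intro sum.cong refl) auto
  then show ?thesis by (simp only: sumT)
qed

lemma nCv: "norm Cv = nb"
proof -
  have "(norm Cv)\<^sup>2 = (\<Sum>i=1..m. if i \<le> r then (\<alpha>1 i)\<^sup>2 + (\<alpha>2 i)\<^sup>2 else 0)"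
    unfolding Cv_def G_norm2 T_def by (intro sum.cong refl) auto
  then have "(norm Cv)\<^sup>2 = nb\<^sup>2" by (simp only: sumT nb2)
  then show ?thesis unfolding nb_def by (simp add: power2_eq_iff_nonneg)
qed

lemma nb_pos: "nb > 0"
proof -
  have "nb \<noteq> 0" using nb2 alpha_pos by auto
  then show ?thesis by (simp add: nb_def)
qed

lemma xe_norm: "norm xe = 1" using nb_pos by (simp add: xe_def nb_def)
lemma xo_norm: "norm xo = 1" using nb_pos nCv by (simp add: xo_def)

lemma xo_xe: "xo \<bullet> xe = 0"
proof -
  have "Cv \<bullet> Bv = 0" unfolding Cv_def Bv_def G_inner T_def by (simp add: sum.neutral)
  then show ?thesis by (simp add: xo_def xe_def)
qed

lemma s1_pos: "\<sigma> 1 > 0" using sig_pos_all[of 1] r by simp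

lemma pos_pow: "\<sigma> 1 ^ j * nb > 0"
  by (rule mult_pos_pos[OF zero_less_power[OF s1_pos] nb_pos])

lemma S_xe: "S *v xe = \<sigma> 1 *\<^sub>R xo"
proof -
  have "S *v Bv = \<sigma> 1 *\<^sub>R Cv"
    unfolding Bv_def Cv_def SG G_scale[symmetric] 
    apply (intro G_cong)
    subgoal for i by (cases "i \<le> r") (simp_all add: T_def sig_top[of i])
    subgoal for i by (cases "i \<le> r") (simp_all add: T_def sig_top[of i])
    done
  then show ?thesis by (simp add: xe_def xo_def matrix_vector_mult_scaleR)
qed

lemma S_xo: "S *v xo = - (\<sigma> 1 *\<^sub>R xe)"
proof -
  have "S *v Cv = (- \<sigma> 1) *\<^sub>R Bv"
    unfolding Bv_def Cv_def SG G_scale[symmetric] 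
    apply (intro G_cong)
    subgoal for i by (cases "i \<le> r") (simp_all add: T_def sig_top[of i])
    subgoal for i by (cases "i \<le> r") (simp_all add: T_def sig_top[of i])
    done
  then show ?thesis by (simp add: xe_def xo_def matrix_vector_mult_scaleR)
qed


lemma SEv: "S *v Ev k = Od k"
  unfolding Ev_def Od_def SG by (intro G_cong) (simp_all add: algebra_simps)

lemma SOd: "S *v Od k = - Ev (Suc k)"
proof -
  have "- Ev (Suc k) = (-1) *\<^sub>R Ev (Suc k)" by simp
  also have "\<dots> = G (\<lambda>i. \<sigma> i * - (\<sigma> i ^ (2 * k + 1) * \<alpha>1 i)) (\<lambda>i. - (\<sigma> i * - (\<sigma> i ^ (2 * k + 1) * \<alpha>2 i)))"
    unfolding Ev_def G_scale[symmetric] by (intro G_cong) (simp_all add: algebra_simps)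
  finally show ?thesis unfolding Od_def SG by simp
qed

lemma Ev_dec: "Ev k = (\<sigma> 1 ^ (2*k) * nb) *\<^sub>R xe + RE k"
proof -
  define f where "f = (\<lambda>i. \<sigma> i ^ (2*k) * \<alpha>1 i)"
  define g where "g = (\<lambda>i. - (\<sigma> i ^ (2*k) * \<alpha>2 i))"
  have "Ev k = G (\<lambda>i. T f i + BB f i) (\<lambda>i. T g i + BB g i)"
    unfolding Ev_def f_def g_def by (intro G_cong) (simp_all add: T_def BB_def)
  also have "\<dots> = G (T f) (T g) + RE k" unfolding G_add RE_def f_def g_def by simp
  also have "G (T f) (T g) = \<sigma> 1 ^ (2*k) *\<^sub>R Bv"
    unfolding Bv_def G_scale[symmetric]
  proof (intro G_cong)
    fix i assume i: "i \<in> {1..m}"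
    then show "T f i = \<sigma> 1 ^ (2*k) * T \<alpha>1 i"
      by (cases "i \<le> r") (simp_all add: T_def f_def sig_top[of i])
    from i show "T g i = \<sigma> 1 ^ (2*k) * T (\<lambda>i. - \<alpha>2 i) i"
      by (cases "i \<le> r") (simp_all add: T_def g_def sig_top[of i])
  qed
  also have "\<dots> = (\<sigma> 1 ^ (2*k) * nb) *\<^sub>R xe" using nb_pos by (simp add: xe_def)
  finally show ?thesis .
qed

lemma Od_dec: "Od k = (\<sigma> 1 ^ (2*k+1) * nb) *\<^sub>R xo + RO k"
proof -
  define f where "f = (\<lambda>i. - (\<sigma> i ^ (2*k+1) * \<alpha>2 i))"
  define g where "g = (\<lambda>i. - (\<sigma> i ^ (2*k+1) * \<alpha>1 i))"
  have "Od k = G (\<lambda>i. T f i + BB f i) (\<lambda>i. T g i + BB g i)"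
    unfolding Od_def f_def g_def by (intro G_cong) (simp_all add: T_def BB_def)
  also have "\<dots> = G (T f) (T g) + RO k" unfolding G_add RO_def f_def g_def by simp
  also have "G (T f) (T g) = \<sigma> 1 ^ (2*k+1) *\<^sub>R Cv"
    unfolding Cv_def G_scale[symmetric]
  proof (intro G_cong)
    fix i assume i: "i \<in> {1..m}"
    then show "T f i = \<sigma> 1 ^ (2*k+1) * T (\<lambda>i. - \<alpha>2 i) i"
      by (cases "i \<le> r") (simp_all add: T_def f_def sig_top[of i])
    from i show "T g i = \<sigma> 1 ^ (2*k+1) * T (\<lambda>i. - \<alpha>1 i) i"
      by (cases "i \<le> r") (simp_all add: T_def g_def sig_top[of i])
  qed
  also have "\<dots> = (\<sigma> 1 ^ (2*k+1) * nb) *\<^sub>R xo" using nb_pos by (simp add: xo_def)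
  finally show ?thesis .
qed

lemma xe_RE: "xe \<bullet> RE k = 0"
  unfolding xe_def Bv_def RE_def inner_scaleR_left G_inner T_def BB_def by (simp add: sum.neutral)

lemma xo_RO: "xo \<bullet> RO k = 0"
  unfolding xo_def Cv_def RO_def inner_scaleR_left G_inner T_def BB_def by (simp add: sum.neutral)

lemma R_bound: "norm (G (BB (\<lambda>i. \<sigma> i ^ e * f i)) (BB (\<lambda>i. \<sigma> i ^ e * g i)))
    \<le> \<sigma> (r+1) ^ e * norm (G (BB f) (BB g))"
proof (rule power2_le_imp_le)
  have sp: "\<sigma> (r+1) > 0" using sig_pos_all[of "r+1"] r by simp
  then show "0 \<le> \<sigma> (r+1) ^ e * norm (G (BB f) (BB g))" by simp
  have "(norm (G (BB (\<lambda>i. \<sigma> i ^ e * f i)) (BB (\<lambda>i. \<sigma> i ^ e * g i))))\<^sup>2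
      = (\<Sum>i=1..m. if i \<le> r then 0 else (\<sigma> i ^ e)\<^sup>2 * ((f i)\<^sup>2 + (g i)\<^sup>2))"
    unfolding G_norm2 BB_def by (intro sum.cong refl) (simp add: power_mult_distrib algebra_simps)
  also have "\<dots> \<le> (\<Sum>i=1..m. (\<sigma> (r+1) ^ e)\<^sup>2 * (if i \<le> r then 0 else ((f i)\<^sup>2 + (g i)\<^sup>2)))"
  proof (intro sum_mono)
    fix i assume i: "i \<in> {1..m}"
    show "(if i \<le> r then 0 else (\<sigma> i ^ e)\<^sup>2 * ((f i)\<^sup>2 + (g i)\<^sup>2))
        \<le> (\<sigma> (r+1) ^ e)\<^sup>2 * (if i \<le> r then 0 else ((f i)\<^sup>2 + (g i)\<^sup>2))"
    proof (cases "i \<le> r")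
      case False
      then have "\<sigma> i \<le> \<sigma> (r+1)" "0 < \<sigma> i" using sig_le[of i] sig_pos_all[of i] i by auto
      then have "(\<sigma> i ^ e)\<^sup>2 \<le> (\<sigma> (r+1) ^ e)\<^sup>2" by (intro power_mono) auto
      then show ?thesis using False by (simp add: mult_right_mono)
    qed simp
  qed
  also have "\<dots> = (\<sigma> (r+1) ^ e * norm (G (BB f) (BB g)))\<^sup>2"
    unfolding power_mult_distrib G_norm2 sum_distrib_left BB_def by (intro sum.cong refl) simp
  finally show "(norm (G (BB (\<lambda>i. \<sigma> i ^ e * f i)) (BB (\<lambda>i. \<sigma> i ^ e * g i))))\<^sup>2
      \<le> (\<sigma> (r+1) ^ e * norm (G (BB f) (BB g)))\<^sup>2" .
qed

lemma RE_bound: "norm (RE k) \<le> \<sigma> (r+1) ^ (2*k) * norm (RE 0)"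
proof -
  have eqk: "RE k = G (BB (\<lambda>i. \<sigma> i ^ (2*k) * \<alpha>1 i)) (BB (\<lambda>i. \<sigma> i ^ (2*k) * - \<alpha>2 i))"
    unfolding RE_def by (intro G_cong) (simp_all add: BB_def)
  have eq0: "RE 0 = G (BB \<alpha>1) (BB (\<lambda>i. - \<alpha>2 i))" unfolding RE_def by (intro G_cong) (simp_all add: BB_def)
  show ?thesis using R_bound[of "2*k" \<alpha>1 "\<lambda>i. - \<alpha>2 i"] unfolding eqk eq0 .
qed

lemma RO_bound: "norm (RO k) \<le> \<sigma> (r+1) ^ (2*k) * norm (RO 0)"
proof -
  have eqk: "RO k = G (BB (\<lambda>i. \<sigma> i ^ (2*k) * - (\<sigma> i * \<alpha>2 i))) (BB (\<lambda>i. \<sigma> i ^ (2*k) * - (\<sigma> i * \<alpha>1 i)))"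
    unfolding RO_def by (intro G_cong) (simp_all add: BB_def algebra_simps)
  have eq0: "RO 0 = G (BB (\<lambda>i. - (\<sigma> i * \<alpha>2 i))) (BB (\<lambda>i. - (\<sigma> i * \<alpha>1 i)))"
    unfolding RO_def by (intro G_cong) (simp_all add: BB_def)
  show ?thesis using R_bound[of "2*k" "\<lambda>i. - (\<sigma> i * \<alpha>2 i)" "\<lambda>i. - (\<sigma> i * \<alpha>1 i)"] unfolding eqk eq0 .
qed

lemma Ev_norm: "norm (Ev k) \<ge> \<sigma> 1 ^ (2*k) * nb" and Ev_pos: "norm (Ev k) > 0"
proof -
  have t: "\<sigma> 1 ^ (2*k) * nb > 0" by (rule pos_pow)
  show "norm (Ev k) \<ge> \<sigma> 1 ^ (2*k) * nb" unfolding Ev_dec using ang_main(3)[OF xe_norm xe_RE t] .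
  then show "norm (Ev k) > 0" using t by linarith
qed

lemma Od_norm: "norm (Od k) \<ge> \<sigma> 1 ^ (2*k+1) * nb" and Od_pos: "norm (Od k) > 0"
proof -
  have t: "\<sigma> 1 ^ (2*k+1) * nb > 0" by (rule pos_pow)
  show "norm (Od k) \<ge> \<sigma> 1 ^ (2*k+1) * nb" unfolding Od_dec using ang_main(3)[OF xo_norm xo_RO t] .
  then show "norm (Od k) > 0" using t by linarith
qed

end


lemma norm_step:
  fixes S :: "real^'n^'n"
  assumes "norm x > 0" "norm y > 0" "S *v x = y"
  shows "(1 / norm (S *v ((1 / norm x) *\<^sub>R x))) *\<^sub>R (S *v ((1 / norm x) *\<^sub>R x)) = (1 / norm y) *\<^sub>R y"
  using assms by (simp add: matrix_vector_mult_scaleR)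

locale setting3 = setting2 S m r \<sigma> u v \<alpha>1 \<alpha>2
  for S :: "real^'n^'n" and m r \<sigma> u v \<alpha>1 \<alpha>2 +
  fixes q :: "nat \<Rightarrow> real^'n"
  assumes q0: "q 0 = 2 *\<^sub>R (\<Sum>i=1..m. \<alpha>1 i *\<^sub>R u i - \<alpha>2 i *\<^sub>R v i)"
    and q0_unit: "norm (q 0) = 1"
    and q_odd: "\<And>k. q (2 * k + 1) = (1 / norm (S *v q (2 * k))) *\<^sub>R (S *v q (2 * k))"
    and q_even: "\<And>k. q (2 * k + 2) = - ((1 / norm (S *v q (2 * k + 1))) *\<^sub>R (S *v q (2 * k + 1)))"
begin

lemma q_form: "q (2*k) = (1 / norm (Ev k)) *\<^sub>R Ev k \<and> q (2*k+1) = (1 / norm (Od k)) *\<^sub>R Od k"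
proof (induction k)
  case 0
  have W: "Ev 0 = (\<Sum>i=1..m. \<alpha>1 i *\<^sub>R u i - \<alpha>2 i *\<^sub>R v i)"
    unfolding Ev_def G_def by (intro sum.cong refl) simp
  have n: "norm (Ev 0) = 1/2" using q0_unit unfolding q0 W[symmetric] by simp
  have e: "q 0 = (1 / norm (Ev 0)) *\<^sub>R Ev 0" unfolding q0 W[symmetric] n by simp
  have "q 1 = (1 / norm (Od 0)) *\<^sub>R Od 0"
    using q_odd[of 0] norm_step[OF Ev_pos Od_pos SEv, of 0] by (simp add: e)
  then show ?case using e by simp
next
  case (Suc k)
  then have o: "q (2*k+1) = (1 / norm (Od k)) *\<^sub>R Od k" by simp
  have SOd': "S *v Od k = - Ev (Suc k)" by (rule SOd)
  have np: "norm (- Ev (Suc k)) > 0" using Ev_pos[of "Suc k"] by simp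
  have "q (2*k+2) = - ((1 / norm (S *v q (2*k+1))) *\<^sub>R (S *v q (2*k+1)))" by (rule q_even)
  also have "\<dots> = - ((1 / norm (S *v ((1 / norm (Od k)) *\<^sub>R Od k))) *\<^sub>R (S *v ((1 / norm (Od k)) *\<^sub>R Od k)))"
    by (simp only: o)
  also have "\<dots> = - ((1 / norm (- Ev (Suc k))) *\<^sub>R (- Ev (Suc k)))"
    by (simp only: norm_step[of "Od k" "- Ev (Suc k)" S, OF Od_pos np SOd'])
  also have "\<dots> = (1 / norm (Ev (Suc k))) *\<^sub>R Ev (Suc k)" by simp
  finally have "q (2*k+2) = (1 / norm (Ev (Suc k))) *\<^sub>R Ev (Suc k)" .
  moreover have "2 * Suc k = 2*k+2" by simp
  ultimately have e: "q (2 * Suc k) = (1 / norm (Ev (Suc k))) *\<^sub>R Ev (Suc k)" by simp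
  have "q (2 * Suc k + 1) = (1 / norm (Od (Suc k))) *\<^sub>R Od (Suc k)"
    using q_odd[of "Suc k"] norm_step[OF Ev_pos Od_pos SEv, of "Suc k"] by (simp only: e)
  then show ?case using e by simp
qed

lemma tan_even: "tan (acute_angle (q (2*k)) xe) = norm (RE k) / (\<sigma> 1 ^ (2*k) * nb)"
proof -
  have t: "\<sigma> 1 ^ (2*k) * nb > 0" by (rule pos_pow)
  have "acute_angle (q (2*k)) xe = acute_angle (Ev k) xe"
    using q_form[of k] Ev_pos[of k] by (simp add: ang_scale)
  then show ?thesis using ang_main(1)[OF xe_norm xe_RE t] by (simp add: Ev_dec)
qed

lemma tan_odd: "tan (acute_angle (q (2*k+1)) xo) = norm (RO k) / (\<sigma> 1 ^ (2*k+1) * nb)"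
proof -
  have t: "\<sigma> 1 ^ (2*k+1) * nb > 0" by (rule pos_pow)
  have "acute_angle (q (2*k+1)) xo = acute_angle (Od k) xo"
    using q_form[of k] Od_pos[of k] by (simp add: ang_scale)
  then show ?thesis using ang_main(1)[OF xo_norm xo_RO t] by (simp add: Od_dec)
qed

lemma tan_Sq0: "tan (acute_angle (S *v q 0) xo) = norm (RO 0) / (\<sigma> 1 * nb)"
proof -
  have t: "\<sigma> 1 ^ (2*0+1) * nb > 0" by (rule pos_pow)
  have "S *v q 0 = (1 / norm (Ev 0)) *\<^sub>R Od 0"
    using q_form[of 0] by (simp add: matrix_vector_mult_scaleR SEv)
  then have "acute_angle (S *v q 0) xo = acute_angle (Od 0) xo"
    using Ev_pos[of 0] by (simp add: ang_scale)
  then show ?thesis using ang_main(1)[OF xo_norm xo_RO t] by (simp add: Od_dec)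
qed

lemma dist_even: "norm (q (2*k) - xe) \<le> 2 * (norm (RE k) / (\<sigma> 1 ^ (2*k) * nb))"
proof -
  have t: "\<sigma> 1 ^ (2*k) * nb > 0" by (rule pos_pow)
  show ?thesis using ang_main(2)[OF xe_norm xe_RE t] q_form[of k] by (simp add: Ev_dec)
qed

lemma dist_odd: "norm (q (2*k+1) - xo) \<le> 2 * (norm (RO k) / (\<sigma> 1 ^ (2*k+1) * nb))"
proof -
  have t: "\<sigma> 1 ^ (2*k+1) * nb > 0" by (rule pos_pow)
  show ?thesis using ang_main(2)[OF xo_norm xo_RO t] q_form[of k] by (simp add: Od_dec)
qed

definition "\<rho> = \<sigma> (r+1) / \<sigma> 1"

lemma rho: "0 < \<rho>" "\<rho> < 1"
  using sig_pos_all[of "r+1"] r s1_pos sig_gap by (auto simp: \<rho>_def)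

lemma rho2: "norm (\<rho>\<^sup>2) < 1"
proof -
  have "\<rho> * \<rho> < 1 * 1" using rho by (intro mult_strict_mono) auto
  then show ?thesis using rho by (simp add: power2_eq_square)
qed

lemma bound_even: "norm (RE k) / (\<sigma> 1 ^ (2*k) * nb) \<le> \<rho> ^ (2*k) * (norm (RE 0) / nb)"
proof -
  have "norm (RE k) / (\<sigma> 1 ^ (2*k) * nb) \<le> \<sigma> (r+1) ^ (2*k) * norm (RE 0) / (\<sigma> 1 ^ (2*k) * nb)"
    using RE_bound[of k] s1_pos nb_pos by (intro divide_right_mono) auto
  also have "\<dots> = \<rho> ^ (2*k) * (norm (RE 0) / nb)"
    using s1_pos nb_pos by (simp add: \<rho>_def power_divide)
  finally show ?thesis .
qed

lemma bound_odd: "norm (RO k) / (\<sigma> 1 ^ (2*k+1) * nb) \<le> \<rho> ^ (2*k) * (norm (RO 0) / (\<sigma> 1 * nb))"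
proof -
  have "norm (RO k) / (\<sigma> 1 ^ (2*k+1) * nb) \<le> \<sigma> (r+1) ^ (2*k) * norm (RO 0) / (\<sigma> 1 ^ (2*k+1) * nb)"
    using RO_bound[of k] s1_pos nb_pos by (intro divide_right_mono) auto
  also have "\<dots> = \<rho> ^ (2*k) * (norm (RO 0) / (\<sigma> 1 * nb))"
    using s1_pos nb_pos by (simp add: \<rho>_def power_divide)
  finally show ?thesis .
qed

lemma lim_even: "(\<lambda>k. q (2*k)) \<longlonglongrightarrow> xe"
proof -
  have "(\<lambda>k. 2 * ((\<rho>\<^sup>2) ^ k * (norm (RE 0) / nb))) \<longlonglongrightarrow> 2 * (0 * (norm (RE 0) / nb))"
    using rho2 by (intro tendsto_intros) simp
  then have z: "(\<lambda>k. 2 * ((\<rho>\<^sup>2) ^ k * (norm (RE 0) / nb))) \<longlonglongrightarrow> 0" by simp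
  have "(\<lambda>k. q (2*k) - xe) \<longlonglongrightarrow> 0"
  proof (rule Lim_null_comparison[OF _ z])
    show "\<forall>\<^sub>F k in sequentially. norm (q (2*k) - xe) \<le> 2 * ((\<rho>\<^sup>2) ^ k * (norm (RE 0) / nb))"
    proof (intro always_eventually allI)
      fix k
      have "norm (q (2*k) - xe) \<le> 2 * (\<rho> ^ (2*k) * (norm (RE 0) / nb))"
        using dist_even[of k] bound_even[of k] by linarith
      then show "norm (q (2*k) - xe) \<le> 2 * ((\<rho>\<^sup>2) ^ k * (norm (RE 0) / nb))"
        by (simp add: power_mult)
    qed
  qed
  then show ?thesis by (simp add: LIM_zero_iff)
qed

lemma lim_odd: "(\<lambda>k. q (2*k - 1)) \<longlonglongrightarrow> xo"
proof -
  have "(\<lambda>k. 2 * ((\<rho>\<^sup>2) ^ k * (norm (RO 0) / (\<sigma> 1 * nb)))) \<longlonglongrightarrow> 2 * (0 * (norm (RO 0) / (\<sigma> 1 * nb)))"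
    using rho2 by (intro tendsto_intros) simp
  then have z: "(\<lambda>k. 2 * ((\<rho>\<^sup>2) ^ k * (norm (RO 0) / (\<sigma> 1 * nb)))) \<longlonglongrightarrow> 0" by simp
  have "(\<lambda>k. q (2*k+1) - xo) \<longlonglongrightarrow> 0"
  proof (rule Lim_null_comparison[OF _ z])
    show "\<forall>\<^sub>F k in sequentially. norm (q (2*k+1) - xo) \<le> 2 * ((\<rho>\<^sup>2) ^ k * (norm (RO 0) / (\<sigma> 1 * nb)))"
    proof (intro always_eventually allI)
      fix k
      have "norm (q (2*k+1) - xo) \<le> 2 * (\<rho> ^ (2*k) * (norm (RO 0) / (\<sigma> 1 * nb)))"
        using dist_odd[of k] bound_odd[of k] by linarith
      then show "norm (q (2*k+1) - xo) \<le> 2 * ((\<rho>\<^sup>2) ^ k * (norm (RO 0) / (\<sigma> 1 * nb)))"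
        by (simp add: power_mult)
    qed
  qed
  then have "(\<lambda>k. q (2*k+1)) \<longlonglongrightarrow> xo" by (simp add: LIM_zero_iff)
  then have "(\<lambda>k. q (2 * Suc k - 1)) \<longlonglongrightarrow> xo" by simp
  then show ?thesis by (rule LIMSEQ_imp_Suc)
qed

lemma tan_bounds:
  "\<forall>k\<ge>1. \<bar>tan (acute_angle (q (2 * k)) xe)\<bar> \<le> (\<sigma> (r + 1) / \<sigma> 1) ^ (2 * k) * \<bar>tan (acute_angle (q 0) xe)\<bar>"
  "\<forall>k\<ge>1. \<bar>tan (acute_angle (q (2 * k - 1)) xo)\<bar> \<le> (\<sigma> (r + 1) / \<sigma> 1) ^ (2 * (k - 1)) * \<bar>tan (acute_angle (S *v q 0) xo)\<bar>"
proof -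
  have nn: "\<sigma> 1 ^ j * nb > 0" for j by (rule pos_pow)
  show "\<forall>k\<ge>1. \<bar>tan (acute_angle (q (2 * k)) xe)\<bar> \<le> (\<sigma> (r + 1) / \<sigma> 1) ^ (2 * k) * \<bar>tan (acute_angle (q 0) xe)\<bar>"
  proof (intro allI impI)
    fix k :: nat
    have "tan (acute_angle (q 0) xe) = norm (RE 0) / nb" using tan_even[of 0] by simp
    then show "\<bar>tan (acute_angle (q (2 * k)) xe)\<bar> \<le> (\<sigma> (r + 1) / \<sigma> 1) ^ (2 * k) * \<bar>tan (acute_angle (q 0) xe)\<bar>"
      using tan_even[of k] bound_even[of k] nn[of "2*k"] nb_pos by (simp add: \<rho>_def)
  qed
  show "\<forall>k\<ge>1. \<bar>tan (acute_angle (q (2 * k - 1)) xo)\<bar> \<le> (\<sigma> (r + 1) / \<sigma> 1) ^ (2 * (k - 1)) * \<bar>tan (acute_angle (S *v q 0) xo)\<bar>"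
  proof (intro allI impI)
    fix k :: nat assume "k \<ge> 1"
    then obtain j where j: "k = Suc j" by (cases k) auto
    have e: "2 * k - 1 = 2 * j + 1" "2 * (k - 1) = 2 * j" using j by auto
    have p: "\<sigma> 1 * nb > 0" by (rule mult_pos_pos[OF s1_pos nb_pos])
    show "\<bar>tan (acute_angle (q (2 * k - 1)) xo)\<bar> \<le> (\<sigma> (r + 1) / \<sigma> 1) ^ (2 * (k - 1)) * \<bar>tan (acute_angle (S *v q 0) xo)\<bar>"
      unfolding e using tan_odd[of j] tan_Sq0 bound_odd[of j] nn[of "2*j+1"] p by (simp add: \<rho>_def)
  qed
qed

end

theorem mainTheorem6:
  fixes S :: "real^'n^'n" and m r :: nat
    and \<sigma> \<alpha>1 \<alpha>2 :: "nat \<Rightarrow> real" and u v q :: "nat \<Rightarrow> real^'n"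
    and xe xo :: "real^'n"
  assumes dim: "CARD('n) = 2 * m"
    and skew: "transpose S = - S"
    and nonsing: "invertible S"
    and r: "1 \<le> r" "r < m"
    and sig_top: "\<And>j. 1 \<le> j \<Longrightarrow> j \<le> r \<Longrightarrow> \<sigma> j = \<sigma> 1"
    and sig_gap: "\<sigma> 1 > \<sigma> (r + 1)"
    and sig_mono: "\<And>j. r + 1 \<le> j \<Longrightarrow> j < m \<Longrightarrow> \<sigma> j \<ge> \<sigma> (j + 1)"
    and sig_pos: "\<sigma> m > 0"
    and uu: "\<And>i j. i \<in> {1..m} \<Longrightarrow> j \<in> {1..m} \<Longrightarrow> u i \<bullet> u j = (if i = j then 1 else 0)"
    and vv: "\<And>i j. i \<in> {1..m} \<Longrightarrow> j \<in> {1..m} \<Longrightarrow> v i \<bullet> v j = (if i = j then 1 else 0)"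
    and uv: "\<And>i j. i \<in> {1..m} \<Longrightarrow> j \<in> {1..m} \<Longrightarrow> u i \<bullet> v j = 0"
    and basis: "span (u ` {1..m} \<union> v ` {1..m}) = UNIV"
    and Sv: "\<And>j. j \<in> {1..m} \<Longrightarrow> S *v v j = \<sigma> j *\<^sub>R u j"
    and Su: "\<And>j. j \<in> {1..m} \<Longrightarrow> S *v u j = - (\<sigma> j *\<^sub>R v j)"
    and q0: "q 0 = 2 *\<^sub>R (\<Sum>i=1..m. \<alpha>1 i *\<^sub>R u i - \<alpha>2 i *\<^sub>R v i)"
    and q0_unit: "norm (q 0) = 1"
    and alpha_pos: "(\<Sum>i=1..r. (\<alpha>1 i)\<^sup>2 + (\<alpha>2 i)\<^sup>2) > 0"
    and q_odd: "\<And>k. q (2 * k + 1) = (1 / norm (S *v q (2 * k))) *\<^sub>R (S *v q (2 * k))"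
    and q_even: "\<And>k. q (2 * k + 2) = - ((1 / norm (S *v q (2 * k + 1))) *\<^sub>R (S *v q (2 * k + 1)))"
    and xe_def: "xe = (1 / norm (\<Sum>i=1..r. \<alpha>1 i *\<^sub>R u i - \<alpha>2 i *\<^sub>R v i))
                        *\<^sub>R (\<Sum>i=1..r. \<alpha>1 i *\<^sub>R u i - \<alpha>2 i *\<^sub>R v i)"
    and xo_def: "xo = (1 / norm (\<Sum>i=1..r. - (\<alpha>1 i *\<^sub>R v i) - \<alpha>2 i *\<^sub>R u i))
                        *\<^sub>R (\<Sum>i=1..r. - (\<alpha>1 i *\<^sub>R v i) - \<alpha>2 i *\<^sub>R u i)"
  shows "(\<lambda>k. q (2 * k)) \<longlonglongrightarrow> xe
    \<and> (\<lambda>k. q (2 * k - 1)) \<longlonglongrightarrow> xo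
    \<and> xo \<bullet> xe = 0
    \<and> S *v xo = - (\<sigma> 1 *\<^sub>R xe)
    \<and> S *v xe = \<sigma> 1 *\<^sub>R xo
    \<and> cmat S *v ((sqrt 2 / 2) *\<^sub>R cvec xo xe) = (\<i> * complex_of_real (\<sigma> 1)) *s ((sqrt 2 / 2) *\<^sub>R cvec xo xe)
    \<and> norm ((sqrt 2 / 2) *\<^sub>R cvec xo xe) = 1
    \<and> cmat S *v ((sqrt 2 / 2) *\<^sub>R cvec xo (- xe)) = (- \<i> * complex_of_real (\<sigma> 1)) *s ((sqrt 2 / 2) *\<^sub>R cvec xo (- xe))
    \<and> norm ((sqrt 2 / 2) *\<^sub>R cvec xo (- xe)) = 1
    \<and> (\<forall>k\<ge>1. \<bar>tan (acute_angle (q (2 * k)) xe)\<bar>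
            \<le> (\<sigma> (r + 1) / \<sigma> 1) ^ (2 * k) * \<bar>tan (acute_angle (q 0) xe)\<bar>)
    \<and> (\<forall>k\<ge>1. \<bar>tan (acute_angle (q (2 * k - 1)) xo)\<bar>
            \<le> (\<sigma> (r + 1) / \<sigma> 1) ^ (2 * (k - 1)) * \<bar>tan (acute_angle (S *v q 0) xo)\<bar>)"
proof -
  interpret L: setting3 S m r \<sigma> u v \<alpha>1 \<alpha>2 q
    by unfold_locales (fact assms)+
  have XE: "xe = L.xe" by (simp add: xe_def L.xe_def L.nb_def L.Bv_sum)
  have XO: "xo = L.xo" by (simp add: xo_def L.xo_def L.nCv[symmetric] L.Cv_sum)
  have n1: "norm (- L.xe) = 1" using L.xe_norm by simp
  show ?thesis unfolding XE XO
    using L.lim_even L.lim_odd L.xo_xe L.S_xo L.S_xe eig_pm[OF L.S_xo L.S_xe]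
      norm_eig[OF L.xo_norm L.xe_norm] norm_eig[OF L.xo_norm n1] L.tan_bounds
    by blast
qed

end
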